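(* Let $G$ be an uncountable group of regular cardinality $\gamma$. Then the ballean $\mathcal{B}(G)$ is decomposable in a direct product, i.e. it is asymorphic to $\mathcal{B}(Z)$ for some direct product $Z=\otimes_{\lambda<\delta}(Z_\lambda,e_\lambda)$ of a pointed family of non-empty sets.
   Context: For an infinite group $G$ with identity $e$, $\mathcal{B}(G)=(G,\mathcal{F},B)$ where $\mathcal{F}=\{A\subseteq G: e\in A, |A|<|G|\}$ and $B(g,A)=gA$. For balleans $(X_1,P_1,B_1)$, $(X_2,P_2,B_2)$ (sets with families of balls $B(x,\alpha)\subseteq X$ indexed by $x\in X,\alpha\in P$), a map $f:X_1\to X_2$ is a $\prec$-mapping if for every $\alpha\in P_1$ there is $\beta\in P_2$ with $f(B_1(x,\alpha))\subseteq B_2(f(x),\beta)$ for all $x$; a bijection $f$ is an asymorphism if $f$ and $f^{-1}$ are $\prec$-mappings. Given an ordinal $\delta$ and non-empty sets $Z_\lambda$ ($\lambda<\delta$) with chosen points $e_\lambda\in Z_\lambda$, the direct product $Z=\otimes_{\lambda<\delta}(Z_\lambda,e_\lambda)$ is the set of functions $f$ on $\{\lambda:\lambda<\delta\}$ with $f(\lambda)\in Z_\lambda$ and $f(\lambda)=e_\lambda$ for all but finitely many $\lambda$; its ballean is $\mathcal{B}(Z)=(Z,\{\lambda:\lambda<\delta\},B)$ with $B(f,\lambda)=\{g\in Z: g(\lambda')=f(\lambda')\text{ for all }\lambda\le\lambda'<\delta\}$. *)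

theory Defs
  imports "HOL-Algebra.Coset" "HOL-Library.Countable_Set"
begin

text \<open>A ballean is given by a support set X, a parameter set P and ball function B.\<close>

definition prec_mapping ::
  "'x set \<Rightarrow> 'p set \<Rightarrow> ('x \<Rightarrow> 'p \<Rightarrow> 'x set) \<Rightarrow>
   'y set \<Rightarrow> 'q set \<Rightarrow> ('y \<Rightarrow> 'q \<Rightarrow> 'y set) \<Rightarrow> ('x \<Rightarrow> 'y) \<Rightarrow> bool" where
  "prec_mapping X1 P1 B1 X2 P2 B2 f \<longleftrightarrow>
     (\<forall>\<alpha>\<in>P1. \<exists>\<beta>\<in>P2. \<forall>x\<in>X1. f ` (B1 x \<alpha>) \<subseteq> B2 (f x) \<beta>)"

definition asymorphism ::
  "'x set \<Rightarrow> 'p set \<Rightarrow> ('x \<Rightarrow> 'p \<Rightarrow> 'x set) \<Rightarrow>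
   'y set \<Rightarrow> 'q set \<Rightarrow> ('y \<Rightarrow> 'q \<Rightarrow> 'y set) \<Rightarrow> ('x \<Rightarrow> 'y) \<Rightarrow> bool" where
  "asymorphism X1 P1 B1 X2 P2 B2 f \<longleftrightarrow>
     bij_betw f X1 X2 \<and>
     prec_mapping X1 P1 B1 X2 P2 B2 f \<and>
     prec_mapping X2 P2 B2 X1 P1 B1 (inv_into X1 f)"

definition group_params :: "('a, 'b) monoid_scheme \<Rightarrow> 'a set set" where
  "group_params G = {A. A \<subseteq> carrier G \<and> \<one>\<^bsub>G\<^esub> \<in> A \<and>
                        (card_of A, card_of (carrier G)) \<in> ordLess}"

definition group_ball :: "('a, 'b) monoid_scheme \<Rightarrow> 'a \<Rightarrow> 'a set \<Rightarrow> 'a set" where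
  "group_ball G g A = g <#\<^bsub>G\<^esub> A"

text \<open>Direct product of a pointed family (Zs i, e i), indexed by a well-order r
  (representing the ordinal delta, with index set Field r).\<close>

definition dprod :: "('i \<times> 'i) set \<Rightarrow> ('i \<Rightarrow> 'z set) \<Rightarrow> ('i \<Rightarrow> 'z) \<Rightarrow> ('i \<Rightarrow> 'z) set" where
  "dprod r Zs e = {f. (\<forall>i\<in>Field r. f i \<in> Zs i) \<and>
                      (\<forall>i. i \<notin> Field r \<longrightarrow> f i = undefined) \<and>
                      finite {i\<in>Field r. f i \<noteq> e i}}"

definition dprod_ball ::
  "('i \<times> 'i) set \<Rightarrow> ('i \<Rightarrow> 'z set) \<Rightarrow> ('i \<Rightarrow> 'z) \<Rightarrow> ('i \<Rightarrow> 'z) \<Rightarrow> 'i \<Rightarrow> ('i \<Rightarrow> 'z) set" where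
  "dprod_ball r Zs e f i = {g \<in> dprod r Zs e. \<forall>j\<in>Field r. (i, j) \<in> r \<longrightarrow> g j = f j}"

end

theory Submission imports Defs "HOL-Algebra.Generated_Groups" begin
unbundle cardinal_syntax

definition Lv :: "('a,'b) monoid_scheme \<Rightarrow> 'a \<Rightarrow> 'a set" where
  "Lv G m = generate G (underS (card_of (carrier G)) m)"
definition Uv :: "('a,'b) monoid_scheme \<Rightarrow> 'a \<Rightarrow> 'a set" where
  "Uv G m = generate G (under (card_of (carrier G)) m)"
definition sel :: "('a,'b) monoid_scheme \<Rightarrow> 'a set \<Rightarrow> 'a" where
  "sel G C = (if \<one>\<^bsub>G\<^esub> \<in> C then \<one>\<^bsub>G\<^esub> else wo_rel.minim (card_of (carrier G)) C)"
definition hh :: "('a,'b) monoid_scheme \<Rightarrow> 'a \<Rightarrow> 'a \<Rightarrow> 'a" where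
  "hh G g = (\<lambda>l. if l \<in> carrier G then
      sel G ((inv\<^bsub>G\<^esub> (sel G (g <#\<^bsub>G\<^esub> Uv G l)) \<otimes>\<^bsub>G\<^esub> g) <#\<^bsub>G\<^esub> Lv G l) else undefined)"
definition ZZ :: "('a,'b) monoid_scheme \<Rightarrow> 'a \<Rightarrow> 'a set" where
  "ZZ G l = (\<lambda>y. sel G (y <#\<^bsub>G\<^esub> Lv G l)) ` Uv G l"
definition RR :: "('a,'b) monoid_scheme \<Rightarrow> ('a \<times> 'a) set" where
  "RR G = {(x,y). y \<noteq> \<one>\<^bsub>G\<^esub> \<and> (x = \<one>\<^bsub>G\<^esub> \<or> ((x,y) \<in> (card_of (carrier G)) \<and> x \<noteq> y))}"
primrec gw :: "('a,'b) monoid_scheme \<Rightarrow> 'a set \<Rightarrow> nat \<Rightarrow> 'a set" where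
  "gw G X 0 = X \<union> m_inv G ` X \<union> {\<one>\<^bsub>G\<^esub>}"
| "gw G X (Suc n) = (\<lambda>(a,b). a \<otimes>\<^bsub>G\<^esub> b) ` (gw G X n \<times> gw G X n)"

context group begin

lemma rr_wo: "wo_rel (card_of (carrier G))"
  unfolding wo_rel_def by (rule card_of_Well_order)

lemma rr_refl: "a \<in> carrier G \<Longrightarrow> (a,a) \<in> (card_of (carrier G))"
  using wo_rel.REFL[OF rr_wo] unfolding refl_on_def Field_card_of by auto

lemma rr_trans: "(a,b) \<in> (card_of (carrier G)) \<Longrightarrow> (b,c) \<in> (card_of (carrier G)) \<Longrightarrow> (a,c) \<in> (card_of (carrier G))"
  using wo_rel.TRANS[OF rr_wo] unfolding trans_def by blast

lemma rr_antisym: "(a,b) \<in> (card_of (carrier G)) \<Longrightarrow> (b,a) \<in> (card_of (carrier G)) \<Longrightarrow> a = b"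
  using wo_rel.ANTISYM[OF rr_wo] unfolding antisym_def by blast

lemma rr_total: "a \<in> carrier G \<Longrightarrow> b \<in> carrier G \<Longrightarrow> (a,b) \<in> (card_of (carrier G)) \<or> (b,a) \<in> (card_of (carrier G))"
  using wo_rel.TOTALS[OF rr_wo] unfolding Field_card_of by blast

lemma rr_in: "(a,b) \<in> (card_of (carrier G)) \<Longrightarrow> a \<in> carrier G \<and> b \<in> carrier G"
  using FieldI1 FieldI2 Field_card_of by metis

lemma rr_max:
  assumes "finite K" "K \<noteq> {}" "K \<subseteq> carrier G"
  shows "\<exists>k\<in>K. \<forall>j\<in>K. (j,k) \<in> (card_of (carrier G))"
  using assms
proof (induction K rule: finite_ne_induct)
  case (singleton x) then show ?case using rr_refl by auto
next
  case (insert x F)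
  then obtain k where k: "k \<in> F" "\<forall>j\<in>F. (j,k) \<in> (card_of (carrier G))" by auto
  have "x \<in> carrier G" "k \<in> carrier G" using insert k by auto
  then consider "(x,k) \<in> (card_of (carrier G))" | "(k,x) \<in> (card_of (carrier G))" using rr_total by blast
  then show ?case
  proof cases
    case 1 then show ?thesis using k by auto
  next
    case 2 then show ?thesis using k rr_trans rr_refl \<open>x \<in> carrier G\<close> by blast
  qed
qed

lemma sub_L: "subgroup (Lv G m) G"
  unfolding Lv_def by (rule generate_is_subgroup) (metis Order_Relation.underS_Field Field_card_of)
lemma sub_U: "subgroup (Uv G m) G"
  unfolding Uv_def by (rule generate_is_subgroup) (metis Order_Relation.under_Field Field_card_of)

lemma L_sub_U: "Lv G m \<subseteq> Uv G m"
  unfolding Lv_def Uv_def by (rule mono_generate) (rule underS_subset_under)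

lemma U_mono: "(l,m) \<in> (card_of (carrier G)) \<Longrightarrow> Uv G l \<subseteq> Uv G m"
  unfolding Uv_def by (rule mono_generate) (auto simp: under_def intro: rr_trans)

lemma U_sub_L: "(l,m) \<in> (card_of (carrier G)) \<Longrightarrow> l \<noteq> m \<Longrightarrow> Uv G l \<subseteq> Lv G m"
  unfolding Uv_def Lv_def by (rule mono_generate) (auto simp: under_def underS_def intro: rr_trans dest: rr_antisym rr_trans)

lemma L_mono: "(l,m) \<in> (card_of (carrier G)) \<Longrightarrow> Lv G l \<subseteq> Lv G m"
  unfolding Lv_def by (rule mono_generate) (auto simp: underS_def intro: rr_trans dest: rr_antisym rr_trans)

lemma lcos_mem_iff:
  assumes "subgroup H G" "a \<in> carrier G"
  shows "x \<in> a <# H \<longleftrightarrow> x \<in> carrier G \<and> inv a \<otimes> x \<in> H"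
proof
  assume "x \<in> a <# H"
  then obtain h where h: "h \<in> H" "x = a \<otimes> h" unfolding l_coset_def by auto
  have hc: "h \<in> carrier G" using h assms subgroup.subset by blast
  show "x \<in> carrier G \<and> inv a \<otimes> x \<in> H" using h hc assms
    by (simp add: m_assoc[symmetric])
next
  assume "x \<in> carrier G \<and> inv a \<otimes> x \<in> H"
  then have "x = a \<otimes> (inv a \<otimes> x)" using assms by (simp add: m_assoc[symmetric])
  then show "x \<in> a <# H" using \<open>x \<in> carrier G \<and> inv a \<otimes> x \<in> H\<close> unfolding l_coset_def by blast
qed

lemma lcos_self: "subgroup H G \<Longrightarrow> a \<in> carrier G \<Longrightarrow> a \<in> a <# H"
  by (simp add: lcos_mem_iff subgroup.one_closed)

lemma lcos_carrier: "subgroup H G \<Longrightarrow> a \<in> carrier G \<Longrightarrow> a <# H \<subseteq> carrier G"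
  using lcos_mem_iff by blast

lemma lcos_mono: "H \<subseteq> K \<Longrightarrow> a <# H \<subseteq> a <# K"
  unfolding l_coset_def by auto

lemma lcos_eq:
  assumes "subgroup H G" "a \<in> carrier G" "b \<in> carrier G"
  shows "a <# H = b <# H \<longleftrightarrow> inv a \<otimes> b \<in> H"
proof
  assume "a <# H = b <# H"
  then show "inv a \<otimes> b \<in> H" using lcos_self[OF assms(1,3)] lcos_mem_iff[OF assms(1,2)] by auto
next
  assume h: "inv a \<otimes> b \<in> H"
  have hi: "inv b \<otimes> a \<in> H" using subgroup.m_inv_closed[OF assms(1) h] assms
    by (simp add: inv_mult_group)
  have key: "x \<in> a <# H \<longleftrightarrow> x \<in> b <# H" for x
  proof -
    have "x \<in> carrier G \<Longrightarrow> inv b \<otimes> x = (inv b \<otimes> a) \<otimes> (inv a \<otimes> x)"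
      using assms by (simp add: m_assoc[symmetric]) (simp add: m_assoc)
    moreover have "x \<in> carrier G \<Longrightarrow> inv a \<otimes> x = (inv a \<otimes> b) \<otimes> (inv b \<otimes> x)"
      using assms by (simp add: m_assoc[symmetric]) (simp add: m_assoc)
    ultimately show ?thesis using lcos_mem_iff[OF assms(1,2)] lcos_mem_iff[OF assms(1,3)]
      h hi subgroup.m_closed[OF assms(1)] by metis
  qed
  then show "a <# H = b <# H" by blast
qed

lemma lcos_member_eq:
  "subgroup H G \<Longrightarrow> a \<in> carrier G \<Longrightarrow> b \<in> a <# H \<Longrightarrow> b <# H = a <# H"
  by (metis lcos_eq lcos_mem_iff)

lemma sel_in: "C \<subseteq> carrier G \<Longrightarrow> C \<noteq> {} \<Longrightarrow> sel G C \<in> C"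
  unfolding sel_def using wo_rel.minim_in[OF rr_wo] by (simp add: Field_card_of)

lemma sel_one: "\<one> \<in> C \<Longrightarrow> sel G C = \<one>"
  unfolding sel_def by simp

lemma sel_one_iff: "C \<subseteq> carrier G \<Longrightarrow> C \<noteq> {} \<Longrightarrow> sel G C = \<one> \<longleftrightarrow> \<one> \<in> C"
  using sel_in sel_one by metis

lemma sel_sub:
  assumes "C \<subseteq> carrier G" "D \<subseteq> C" "sel G C \<in> D"
  shows "sel G D = sel G C"
proof (cases "\<one> \<in> C")
  case True
  then show ?thesis using assms by (simp add: sel_def)
next
  case False
  then have n: "\<one> \<notin> D" using assms by auto
  have D: "D \<subseteq> Field (card_of (carrier G))" "D \<noteq> {}" using assms by (auto simp: Field_card_of)
  have C: "C \<subseteq> Field (card_of (carrier G))" "C \<noteq> {}" using assms by (auto simp: Field_card_of)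
  have m1: "wo_rel.minim (card_of (carrier G)) D \<in> D" using wo_rel.minim_in[OF rr_wo D] .
  have e: "sel G C = wo_rel.minim (card_of (carrier G)) C" "sel G D = wo_rel.minim (card_of (carrier G)) D"
    using False n by (auto simp: sel_def)
  have "(wo_rel.minim (card_of (carrier G)) C, wo_rel.minim (card_of (carrier G)) D) \<in> (card_of (carrier G))"
    using wo_rel.minim_least[OF rr_wo C(1)] m1 assms(2) by blast
  moreover have "(wo_rel.minim (card_of (carrier G)) D, wo_rel.minim (card_of (carrier G)) C) \<in> (card_of (carrier G))"
    using wo_rel.minim_least[OF rr_wo D(1)] assms(3) e by auto
  ultimately show ?thesis using e rr_antisym by metis
qed

lemma sel_le:
  assumes "C \<subseteq> carrier G" "x \<in> C"
  shows "sel G C = x \<or> (sel G C, x) \<in> RR G"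
proof (cases "\<one> \<in> C")
  case True
  then show ?thesis by (auto simp: sel_def RR_def)
next
  case False
  have C: "C \<subseteq> Field (card_of (carrier G))" using assms by (auto simp: Field_card_of)
  have "(sel G C, x) \<in> (card_of (carrier G))" using False wo_rel.minim_least[OF rr_wo C assms(2)]
    by (simp add: sel_def)
  then show ?thesis using False assms by (auto simp: RR_def sel_def)
qed

lemma RR_trans: "(x,y) \<in> RR G \<Longrightarrow> (y,z) \<in> RR G \<Longrightarrow> (x,z) \<in> RR G"
  unfolding RR_def by (auto dest: rr_antisym intro: rr_trans)

lemma RR_wf: "wf (RR G)"
proof -
  have w: "wf ((card_of (carrier G)) - Id)" using wo_rel.WELL[OF rr_wo] unfolding well_order_on_def by blast
  let ?f = "\<lambda>x. (if x = \<one> then 0::nat else 1, x)"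
  have "RR G \<subseteq> inv_image (less_than <*lex*> ((card_of (carrier G)) - Id)) ?f"
    unfolding RR_def by auto
  moreover have "wf (inv_image (less_than <*lex*> ((card_of (carrier G)) - Id)) ?f)"
    using w by (intro wf_inv_image wf_lex_prod wf_less_than)
  ultimately show ?thesis using wf_subset by blast
qed


lemma gw_carrier: "X \<subseteq> carrier G \<Longrightarrow> gw G X n \<subseteq> carrier G"
  by (induction n) auto

lemma gw_one: "\<one> \<in> gw G X n"
  by (induction n) (force simp: image_iff)+

lemma gw_Suc: "X \<subseteq> carrier G \<Longrightarrow> gw G X n \<subseteq> gw G X (Suc n)"
proof
  fix x assume X: "X \<subseteq> carrier G" and x: "x \<in> gw G X n"
  then have "x \<in> carrier G" using gw_carrier by blast
  then have "x = x \<otimes> \<one>" by simp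
  then show "x \<in> gw G X (Suc n)" using x gw_one by (force simp: image_iff)
qed

lemma gw_mono: "X \<subseteq> carrier G \<Longrightarrow> n \<le> m \<Longrightarrow> gw G X n \<subseteq> gw G X m"
proof (induction m)
  case 0 then show ?case by simp
next
  case (Suc m) then show ?case using gw_Suc[OF Suc.prems(1), of m] by (cases "n = Suc m") auto
qed

lemma generate_gw: assumes X: "X \<subseteq> carrier G" shows "generate G X \<subseteq> (\<Union>n. gw G X n)"
proof
  fix x assume "x \<in> generate G X"
  then show "x \<in> (\<Union>n. gw G X n)"
  proof (induction x rule: generate.induct)
    case one then show ?case using gw_one by blast
  next
    case (incl h) then show ?case by (auto intro: exI[of _ 0])
  next
    case (inv h) then show ?case by (auto intro: exI[of _ 0])
  next
    case (eng h1 h2)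
    then obtain n m where "h1 \<in> gw G X n" "h2 \<in> gw G X m" by auto
    then have "h1 \<in> gw G X (max n m)" "h2 \<in> gw G X (max n m)"
      using gw_mono[OF X] by (meson max.cobounded1 max.cobounded2 subsetD)+
    then have "h1 \<otimes> h2 \<in> gw G X (Suc (max n m))" by force
    then show ?case by blast
  qed
qed

lemma generate_card:
  assumes unc: "\<not> countable (carrier G)" and reg: "regularCard (card_of (carrier G))"
    and X: "X \<subseteq> carrier G" "card_of X <o card_of (carrier G)"
  shows "card_of (generate G X) <o card_of (carrier G)"
proof -
  have inf: "\<not> finite (Field (card_of (carrier G)))" using unc Field_card_of
    by (metis countable_finite)
  have co: "Card_order (card_of (carrier G))" by (rule card_of_Card_order)
  have st: "stable (card_of (carrier G))" using regularCard_stable[OF co inf reg] .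
  have fin1: "card_of {\<one>} <o card_of (carrier G)"
    using finite_ordLess_infinite[OF card_of_Well_order card_of_Well_order, of "{\<one>}" "carrier G"] inf
    by (simp add: Field_card_of)
  have nat: "card_of (UNIV :: nat set) <o card_of (carrier G)"
  proof -
    have "\<not> (card_of (carrier G) \<le>o card_of (UNIV :: nat set))"
    proof
      assume "card_of (carrier G) \<le>o card_of (UNIV :: nat set)"
      then obtain f :: "'a \<Rightarrow> nat" where "inj_on f (carrier G)"
        using card_of_ordLeq[of "carrier G" "UNIV :: nat set"] by auto
      then show False using unc unfolding countable_def by blast
    qed
    then show ?thesis using not_ordLeq_iff_ordLess[OF card_of_Well_order card_of_Well_order,
      of "carrier G" "UNIV :: nat set"] by simp
  qed
  have gwc: "card_of (gw G X n) <o card_of (carrier G)" for n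
  proof (induction n)
    case 0
    have "card_of (m_inv G ` X) <o card_of (carrier G)"
      by (rule ordLeq_ordLess_trans[OF card_of_image X(2)])
    then have "card_of (X \<union> m_inv G ` X) <o card_of (carrier G)"
      by (rule card_of_Un_ordLess_infinite_Field[OF inf co X(2)])
    then have "card_of (X \<union> m_inv G ` X \<union> {\<one>}) <o card_of (carrier G)"
      by (rule card_of_Un_ordLess_infinite_Field[OF inf co _ fin1])
    then show ?case by simp
  next
    case (Suc n)
    have "card_of (SIGMA a : gw G X n. gw G X n) <o card_of (carrier G)"
      by (rule stable_elim[OF st Suc Suc])
    then have "card_of (gw G X n \<times> gw G X n) <o card_of (carrier G)" by simp
    then have "card_of ((\<lambda>(a,b). a \<otimes> b) ` (gw G X n \<times> gw G X n)) <o card_of (carrier G)"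
      by (rule ordLeq_ordLess_trans[OF card_of_image])
    then show ?case by simp
  qed
  have "card_of (\<Union>n. gw G X n) <o card_of (carrier G)"
    by (rule stable_UNION[OF st nat gwc])
  then show ?thesis by (rule ordLeq_ordLess_trans[OF card_of_mono1[OF generate_gw[OF X(1)]]])
qed

lemma generate_fin:
  "x \<in> generate G H \<Longrightarrow> \<exists>F. finite F \<and> F \<subseteq> H \<and> x \<in> generate G F"
proof (induction x rule: generate.induct)
  case one then show ?case by (auto intro: generate.one)
next
  case (incl h) then show ?case by (auto intro!: exI[of _ "{h}"] generate.incl)
next
  case (inv h) then show ?case by (auto intro!: exI[of _ "{h}"] generate.inv)
next
  case (eng h1 h2)
  then obtain F1 F2 where "finite F1" "F1 \<subseteq> H" "h1 \<in> generate G F1" "finite F2" "F2 \<subseteq> H" "h2 \<in> generate G F2"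
    by auto
  then show ?case using mono_generate[of F1 "F1 \<union> F2"] mono_generate[of F2 "F1 \<union> F2"]
    by (intro exI[of _ "F1 \<union> F2"]) (auto intro: generate.eng)
qed

lemma generate_empty: "generate G {} = {\<one>}"
proof -
  have "x \<in> generate G {} \<Longrightarrow> x = \<one>" for x
    by (induction x rule: generate.induct) auto
  then show ?thesis using generate.one by blast
qed


abbreviation "rc \<equiv> card_of (carrier G)"

lemma inv_swap: "subgroup H G \<Longrightarrow> a \<in> carrier G \<Longrightarrow> b \<in> carrier G \<Longrightarrow> inv a \<otimes> b \<in> H \<longleftrightarrow> inv b \<otimes> a \<in> H"
proof -
  assume H: "subgroup H G" and a: "a \<in> carrier G" and b: "b \<in> carrier G"
  have e1: "inv (inv a \<otimes> b) = inv b \<otimes> a" using a b by (simp add: inv_mult_group)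
  have e2: "inv (inv b \<otimes> a) = inv a \<otimes> b" using a b by (simp add: inv_mult_group)
  show ?thesis using subgroup.m_inv_closed[OF H, of "inv a \<otimes> b"] subgroup.m_inv_closed[OF H, of "inv b \<otimes> a"] e1 e2
    by auto
qed

lemma carrier_min: "\<exists>l0\<in>carrier G. \<forall>m\<in>carrier G. (l0,m) \<in> rc"
proof -
  have s: "carrier G \<subseteq> Field rc" "carrier G \<noteq> {}" by (auto simp: Field_card_of)
  define m where "m = wo_rel.minim rc (carrier G)"
  have "m \<in> carrier G" using wo_rel.minim_in[OF rr_wo s] m_def by simp
  moreover have "\<forall>x\<in>carrier G. (m,x) \<in> rc" using wo_rel.minim_least[OF rr_wo s(1)] m_def by simp
  ultimately show ?thesis by blast
qed

lemma sel_coset_in: "subgroup H G \<Longrightarrow> a \<in> carrier G \<Longrightarrow> sel G (a <# H) \<in> a <# H"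
proof -
  assume H: "subgroup H G" and a: "a \<in> carrier G"
  have "a <# H \<noteq> {}" using lcos_self[OF H a] by blast
  then show ?thesis using sel_in[OF lcos_carrier[OF H a]] by blast
qed

lemma sel_coset_carrier: "subgroup H G \<Longrightarrow> a \<in> carrier G \<Longrightarrow> sel G (a <# H) \<in> carrier G"
proof -
  assume H: "subgroup H G" and a: "a \<in> carrier G"
  show ?thesis using sel_coset_in[OF H a] lcos_carrier[OF H a] by blast
qed

lemma hh_c:
  assumes "g \<in> carrier G" "l \<in> carrier G"
  shows "sel G (g <# Uv G l) \<in> carrier G" "inv (sel G (g <# Uv G l)) \<otimes> g \<in> Uv G l"
proof -
  show c: "sel G (g <# Uv G l) \<in> carrier G" using sel_coset_carrier[OF sub_U assms(1)] .
  have "inv g \<otimes> sel G (g <# Uv G l) \<in> Uv G l"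
    using sel_coset_in[OF sub_U assms(1)] lcos_mem_iff[OF sub_U assms(1)] by blast
  then show "inv (sel G (g <# Uv G l)) \<otimes> g \<in> Uv G l" using inv_swap[OF sub_U assms(1) c] by blast
qed

lemma hh_app: "l \<in> carrier G \<Longrightarrow> hh G g l = sel G ((inv (sel G (g <# Uv G l)) \<otimes> g) <# Lv G l)"
  unfolding hh_def by simp

lemma hh_in_ZZ: "g \<in> carrier G \<Longrightarrow> l \<in> carrier G \<Longrightarrow> hh G g l \<in> ZZ G l"
  unfolding ZZ_def using hh_c hh_app by blast

lemma sel_coset_one:
  assumes "subgroup H G" "y \<in> carrier G"
  shows "sel G (y <# H) = \<one> \<longleftrightarrow> y \<in> H"
proof -
  have "sel G (y <# H) = \<one> \<longleftrightarrow> \<one> \<in> y <# H"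
    using sel_one_iff[OF lcos_carrier[OF assms]] lcos_self[OF assms] by blast
  also have "\<dots> \<longleftrightarrow> inv y \<in> H" using lcos_mem_iff[OF assms] assms by simp
  also have "\<dots> \<longleftrightarrow> y \<in> H" using assms
    by (metis inv_inv subgroup.m_inv_closed)
  finally show ?thesis .
qed

lemma hh_one_iff:
  assumes g: "g \<in> carrier G" and l: "l \<in> carrier G"
  shows "hh G g l = \<one> \<longleftrightarrow> sel G (g <# Uv G l) \<in> g <# Lv G l"
proof -
  let ?c = "sel G (g <# Uv G l)"
  have c: "?c \<in> carrier G" using hh_c[OF g l] by blast
  have "hh G g l = \<one> \<longleftrightarrow> inv ?c \<otimes> g \<in> Lv G l"
    using hh_app[OF l] sel_coset_one[OF sub_L, of "inv ?c \<otimes> g"] c g by simp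
  also have "\<dots> \<longleftrightarrow> inv g \<otimes> ?c \<in> Lv G l" using inv_swap[OF sub_L c g] .
  also have "\<dots> \<longleftrightarrow> ?c \<in> g <# Lv G l" using lcos_mem_iff[OF sub_L g] c by blast
  finally show ?thesis .
qed

lemma supp_fin:
  assumes g: "g \<in> carrier G"
  shows "finite {l \<in> carrier G. sel G (g <# Uv G l) \<notin> g <# Lv G l}" (is "finite ?S")
proof -
  have main: "\<forall>l. l \<in> carrier G \<longrightarrow> sel G (g <# Lv G l) = a \<longrightarrow> finite {m \<in> ?S. (l,m) \<in> rc}" for a
  proof (induction a rule: wf_induct[OF RR_wf])
    case (1 a)
    show ?case
    proof (intro allI impI)
      fix l assume l: "l \<in> carrier G" and la: "sel G (g <# Lv G l) = a"
      let ?T = "{m \<in> ?S. (l,m) \<in> rc}"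
      show "finite ?T"
      proof (cases "?T = {}")
        case True then show ?thesis by (subst True) simp
      next
        case False
        define m0 where "m0 = wo_rel.minim rc ?T"
        have Tsub: "?T \<subseteq> Field rc" by (auto simp: Field_card_of)
        have m0T: "m0 \<in> ?T" using wo_rel.minim_in[OF rr_wo Tsub False] m0_def by simp
        have m0le: "\<And>m. m \<in> ?T \<Longrightarrow> (m0,m) \<in> rc" using wo_rel.minim_least[OF rr_wo Tsub] m0_def by simp
        define b where "b = sel G (g <# Uv G m0)"
        have bn: "b \<notin> g <# Lv G m0" using m0T b_def by simp
        have aL: "a \<in> g <# Lv G l" using la sel_coset_in[OF sub_L g] by blast
        have aL0: "a \<in> g <# Lv G m0" using aL lcos_mono[OF L_mono[of l m0]] m0T by blast
        have aU: "a \<in> g <# Uv G m0" using aL0 lcos_mono[OF L_sub_U] by blast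
        have "b = a \<or> (b,a) \<in> RR G" using sel_le[OF lcos_carrier[OF sub_U g] aU] b_def by simp
        then have ba: "(b,a) \<in> RR G" using bn aL0 by blast
        let ?T' = "?T - {m0}"
        show ?thesis
        proof (cases "?T' = {}")
          case True
          then have "?T \<subseteq> {m0}" by blast
          then show ?thesis using finite_subset by blast
        next
          case False
          define l' where "l' = wo_rel.minim rc ?T'"
          have T'sub: "?T' \<subseteq> Field rc" by (auto simp: Field_card_of)
          have l'T: "l' \<in> ?T'" using wo_rel.minim_in[OF rr_wo T'sub False] l'_def by simp
          have l'le: "\<And>m. m \<in> ?T' \<Longrightarrow> (l',m) \<in> rc" using wo_rel.minim_least[OF rr_wo T'sub] l'_def by simp
          have m0l': "(m0,l') \<in> rc" "m0 \<noteq> l'" using m0le l'T by auto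
          define c where "c = sel G (g <# Lv G l')"
          have bU: "b \<in> g <# Uv G m0" using sel_coset_in[OF sub_U g] b_def by simp
          have bL: "b \<in> g <# Lv G l'" using bU lcos_mono[OF U_sub_L[OF m0l']] by blast
          have "c = b \<or> (c,b) \<in> RR G" using sel_le[OF lcos_carrier[OF sub_L g] bL] c_def by simp
          then have ca: "(c,a) \<in> RR G" using ba RR_trans by blast
          have l'c: "l' \<in> carrier G" using l'T by simp
          have "finite {m \<in> ?S. (l',m) \<in> rc}" using 1 ca l'c c_def by blast
          moreover have "?T \<subseteq> insert m0 {m \<in> ?S. (l',m) \<in> rc}" using l'le by auto
          ultimately show ?thesis by (meson finite_insert finite_subset)
        qed
      qed
    qed
  qed
  obtain l0 where l0: "l0 \<in> carrier G" "\<forall>m\<in>carrier G. (l0,m) \<in> rc" using carrier_min by blast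
  then have "?S \<subseteq> {m \<in> ?S. (l0,m) \<in> rc}" by auto
  then show ?thesis using main[of "sel G (g <# Lv G l0)"] l0 finite_subset by blast
qed

lemma hh_dprod: "g \<in> carrier G \<Longrightarrow> hh G g \<in> dprod rc (ZZ G) (\<lambda>_. \<one>)"
proof -
  assume g: "g \<in> carrier G"
  have "{i \<in> Field rc. hh G g i \<noteq> \<one>} = {l \<in> carrier G. sel G (g <# Uv G l) \<notin> g <# Lv G l}"
    using hh_one_iff[OF g] by (auto simp: Field_card_of)
  then show ?thesis unfolding dprod_def using supp_fin[OF g] hh_in_ZZ[OF g]
    by (auto simp: Field_card_of hh_def)
qed


lemma hh_local:
  assumes x: "x \<in> carrier G" and g: "g \<in> carrier G" and j: "j \<in> carrier G"
    and d: "inv g \<otimes> x \<in> Lv G j"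
  shows "hh G x j = hh G g j"
proof -
  have "inv x \<otimes> g \<in> Lv G j" using inv_swap[OF sub_L g x] d by blast
  then have "inv x \<otimes> g \<in> Uv G j" using L_sub_U by blast
  then have xU: "x <# Uv G j = g <# Uv G j" using lcos_eq[OF sub_U x g] by blast
  define c where "c = sel G (g <# Uv G j)"
  have c: "c \<in> carrier G" using hh_c[OF g j] c_def by simp
  have "inv (inv c \<otimes> x) \<otimes> (inv c \<otimes> g) = inv x \<otimes> g"
    using c x g by (simp add: inv_mult_group m_assoc[symmetric]) (simp add: m_assoc)
  then have "(inv c \<otimes> x) <# Lv G j = (inv c \<otimes> g) <# Lv G j"
    using lcos_eq[OF sub_L[of j], of "inv c \<otimes> x" "inv c \<otimes> g"] c x g \<open>inv x \<otimes> g \<in> Lv G j\<close> by simp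
  then show ?thesis using hh_app[OF j] xU c_def by simp
qed

lemma agree_L:
  assumes x: "x \<in> carrier G" and g: "g \<in> carrier G" and l: "l \<in> carrier G"
    and agree: "\<forall>j\<in>carrier G. (l,j) \<in> rc \<longrightarrow> hh G x j = hh G g j"
  shows "inv x \<otimes> g \<in> Lv G l"
proof -
  define d where "d = inv x \<otimes> g"
  have dc: "d \<in> carrier G" using x g d_def by simp
  define N where "N = {m \<in> carrier G. (l,m) \<in> rc \<and> d \<in> Uv G m}"
  have dUd: "d \<in> Uv G d" unfolding Uv_def by (rule generate.incl) (simp add: under_def rr_refl[OF dc])
  have "N \<noteq> {}"
  proof (cases "(l,d) \<in> rc")
    case True then show ?thesis using dUd dc N_def by blast
  next
    case False
    then have "(d,l) \<in> rc" using rr_total[OF l dc] by blast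
    then have "d \<in> Uv G l" using dUd U_mono by blast
    then show ?thesis using l rr_refl[OF l] N_def by blast
  qed
  moreover have Nsub: "N \<subseteq> Field rc" using N_def by (auto simp: Field_card_of)
  ultimately have nuN: "wo_rel.minim rc N \<in> N" using wo_rel.minim_in[OF rr_wo] by blast
  define nu where "nu = wo_rel.minim rc N"
  have nu: "nu \<in> carrier G" "(l,nu) \<in> rc" "d \<in> Uv G nu" using nuN nu_def N_def by auto
  have nuleast: "\<And>m. m \<in> N \<Longrightarrow> (nu,m) \<in> rc" using wo_rel.minim_least[OF rr_wo Nsub] nu_def by simp
  have xU: "x <# Uv G nu = g <# Uv G nu" using lcos_eq[OF sub_U x g] nu(3) d_def by blast
  define c where "c = sel G (g <# Uv G nu)"
  have c: "c \<in> carrier G" using hh_c[OF g nu(1)] c_def by simp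
  have "hh G x nu = hh G g nu" using agree nu by blast
  then have eqs: "sel G ((inv c \<otimes> x) <# Lv G nu) = sel G ((inv c \<otimes> g) <# Lv G nu)"
    using hh_app[OF nu(1)] xU c_def by simp
  have cx: "inv c \<otimes> x \<in> carrier G" and cg: "inv c \<otimes> g \<in> carrier G" using c x g by auto
  have s1: "sel G ((inv c \<otimes> x) <# Lv G nu) \<in> (inv c \<otimes> x) <# Lv G nu" using sel_coset_in[OF sub_L cx] .
  have s2: "sel G ((inv c \<otimes> x) <# Lv G nu) \<in> (inv c \<otimes> g) <# Lv G nu" using sel_coset_in[OF sub_L cg] eqs by simp
  have "(inv c \<otimes> x) <# Lv G nu = (inv c \<otimes> g) <# Lv G nu"
    using lcos_member_eq[OF sub_L cx s1] lcos_member_eq[OF sub_L cg s2] by simp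
  then have "inv (inv c \<otimes> x) \<otimes> (inv c \<otimes> g) \<in> Lv G nu" using lcos_eq[OF sub_L cx cg] by blast
  moreover have "inv (inv c \<otimes> x) \<otimes> (inv c \<otimes> g) = d"
    using c x g d_def by (simp add: inv_mult_group m_assoc[symmetric]) (simp add: m_assoc)
  ultimately have dL: "d \<in> Lv G nu" by simp
  show ?thesis
  proof (cases "nu = l")
    case True then show ?thesis using dL d_def by simp
  next
    case False
    obtain F where F: "finite F" "F \<subseteq> underS rc nu" "d \<in> generate G F"
      using generate_fin dL unfolding Lv_def by blast
    have Kc: "insert l F \<subseteq> carrier G" using F(2) l underS_Field[of _ rc nu] by (auto simp: Field_card_of)
    obtain k where k: "k \<in> insert l F" "\<forall>j\<in>insert l F. (j,k) \<in> rc"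
      using rr_max[OF _ _ Kc] F(1) by blast
    have lu: "l \<in> underS rc nu" using nu(2) False by (simp add: underS_def)
    have ku: "k \<in> underS rc nu" using k(1) lu F(2) by blast
    have kc: "k \<in> carrier G" using k(1) Kc by blast
    have "F \<subseteq> under rc k" using k(2) by (auto simp: under_def)
    then have "d \<in> Uv G k" unfolding Uv_def using mono_generate F(3) by blast
    then have "k \<in> N" using N_def kc k(2) by blast
    then have "(nu,k) \<in> rc" by (rule nuleast)
    then show ?thesis using ku rr_antisym by (auto simp: underS_def)
  qed
qed

lemma hh_inj: "inj_on (hh G) (carrier G)"
proof (rule inj_onI)
  fix x g assume x: "x \<in> carrier G" and g: "g \<in> carrier G" and e: "hh G x = hh G g"
  obtain l0 where l0: "l0 \<in> carrier G" "\<forall>m\<in>carrier G. (l0,m) \<in> rc" using carrier_min by blast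
  have "inv x \<otimes> g \<in> Lv G l0" using agree_L[OF x g l0(1)] e by simp
  moreover have "underS rc l0 = {}"
    using l0 rr_antisym rr_in by (auto simp: underS_def)
  ultimately have "inv x \<otimes> g = \<one>" unfolding Lv_def using generate_empty by simp
  moreover have "x \<otimes> (inv x \<otimes> g) = g" using x g by (simp add: m_assoc[symmetric])
  ultimately show "x = g" using x by simp
qed


lemma rc_wf: "wf (rc - Id)"
  using wo_rel.WELL[OF rr_wo] unfolding well_order_on_def by blast

lemma hh_one: "l \<in> carrier G \<Longrightarrow> hh G \<one> l = \<one>"
proof -
  assume l: "l \<in> carrier G"
  have "sel G (\<one> <# Uv G l) = \<one>" using sel_one lcos_self[OF sub_U one_closed] by blast
  then show ?thesis using hh_one_iff[OF one_closed l] lcos_self[OF sub_L one_closed] by simp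
qed

lemma hh_surj_aux:
  "\<mu> \<in> carrier G \<longrightarrow> (\<forall>d\<in>carrier G. \<forall>f\<in>dprod rc (ZZ G) (\<lambda>_. \<one>).
     (\<forall>k\<in>carrier G. (\<mu>,k) \<in> rc \<longrightarrow> f k = hh G (sel G (d <# Lv G \<mu>)) k) \<longrightarrow>
     (\<exists>x\<in>d <# Lv G \<mu>. hh G x = f))"
proof (induction \<mu> rule: wf_induct[OF rc_wf])
  case (1 \<mu>)
  show ?case
  proof (intro impI ballI)
    fix d f
    assume mu: "\<mu> \<in> carrier G" and d: "d \<in> carrier G" and f: "f \<in> dprod rc (ZZ G) (\<lambda>_. \<one>)"
      and hyp: "\<forall>k\<in>carrier G. (\<mu>,k) \<in> rc \<longrightarrow> f k = hh G (sel G (d <# Lv G \<mu>)) k"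
    define sD where "sD = sel G (d <# Lv G \<mu>)"
    have sDin: "sD \<in> d <# Lv G \<mu>" using sel_coset_in[OF sub_L d] sD_def by simp
    have sDc: "sD \<in> carrier G" using sel_coset_carrier[OF sub_L d] sD_def by simp
    have fout: "\<And>i. i \<notin> carrier G \<Longrightarrow> f i = undefined" using f by (simp add: dprod_def Field_card_of)
    have fZ: "\<And>i. i \<in> carrier G \<Longrightarrow> f i \<in> ZZ G i" using f by (simp add: dprod_def Field_card_of)
    have ffin: "finite {i \<in> carrier G. f i \<noteq> \<one>}" using f by (simp add: dprod_def Field_card_of)
    have hfin: "finite {i \<in> carrier G. hh G sD i \<noteq> \<one>}" using hh_dprod[OF sDc] by (simp add: dprod_def Field_card_of)
    define S' where "S' = {\<nu> \<in> carrier G. (\<nu>,\<mu>) \<in> rc \<and> \<nu> \<noteq> \<mu> \<and> f \<nu> \<noteq> hh G sD \<nu>}"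
    have "S' \<subseteq> {i \<in> carrier G. f i \<noteq> \<one>} \<union> {i \<in> carrier G. hh G sD i \<noteq> \<one>}" using S'_def by auto
    then have S'fin: "finite S'" using ffin hfin finite_subset by blast
    show "\<exists>x\<in>d <# Lv G \<mu>. hh G x = f"
    proof (cases "S' = {}")
      case True
      have "hh G sD = f"
      proof
        fix k show "hh G sD k = f k"
        proof (cases "k \<in> carrier G")
          case False then show ?thesis using fout by (simp add: hh_def)
        next
          case kc: True
          show ?thesis
          proof (cases "(\<mu>,k) \<in> rc")
            case True then show ?thesis using hyp kc sD_def by simp
          next
            case False
            then have "(k,\<mu>) \<in> rc" "k \<noteq> \<mu>" using rr_total[OF kc mu] rr_refl[OF mu] by auto
            then show ?thesis using True kc S'_def by auto
          qed
        qed
      qed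
      then show ?thesis using sDin by blast
    next
      case False
      obtain \<nu> where nuS: "\<nu> \<in> S'" and numax: "\<forall>j\<in>S'. (j,\<nu>) \<in> rc"
        using rr_max[OF S'fin False] S'_def by blast
      have nuc: "\<nu> \<in> carrier G" and numu: "(\<nu>,\<mu>) \<in> rc" "\<nu> \<noteq> \<mu>" using nuS S'_def by auto
      obtain y where y: "y \<in> Uv G \<nu>" "f \<nu> = sel G (y <# Lv G \<nu>)" using fZ[OF nuc] unfolding ZZ_def by blast
      have yc: "y \<in> carrier G" using y(1) subgroup.subset[OF sub_U] by blast
      define d'' where "d'' = sD \<otimes> y"
      have d''c: "d'' \<in> carrier G" using d''_def sDc yc by simp
      define z where "z = sel G (d'' <# Lv G \<nu>)"
      have zin: "z \<in> d'' <# Lv G \<nu>" using sel_coset_in[OF sub_L d''c] z_def by simp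
      have zc: "z \<in> carrier G" using sel_coset_carrier[OF sub_L d''c] z_def by simp
      have UL: "Uv G \<nu> \<subseteq> Lv G \<mu>" using U_sub_L[OF numu] .
      have dsD: "d <# Lv G \<mu> = sD <# Lv G \<mu>" using lcos_member_eq[OF sub_L d sDin] by simp
      have Dsub: "sD <# Uv G \<nu> \<subseteq> d <# Lv G \<mu>" using dsD lcos_mono[OF UL] by simp
      have selDU: "sel G (sD <# Uv G \<nu>) = sD"
        using sel_sub[OF lcos_carrier[OF sub_L d] Dsub] lcos_self[OF sub_U sDc] sD_def by simp
      have zsub: "d'' <# Lv G \<nu> \<subseteq> sD <# Uv G \<nu>"
      proof
        fix x assume "x \<in> d'' <# Lv G \<nu>"
        then have xc: "x \<in> carrier G" and xl: "inv d'' \<otimes> x \<in> Lv G \<nu>" using lcos_mem_iff[OF sub_L d''c] by auto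
        have "inv sD \<otimes> x = y \<otimes> (inv d'' \<otimes> x)" using d''_def sDc yc xc
          by (simp add: inv_mult_group m_assoc[symmetric])
        moreover have "y \<otimes> (inv d'' \<otimes> x) \<in> Uv G \<nu>"
          using subgroup.m_closed[OF sub_U y(1)] xl L_sub_U by blast
        ultimately show "x \<in> sD <# Uv G \<nu>" using lcos_mem_iff[OF sub_U sDc] xc by simp
      qed
      have zU: "z \<in> sD <# Uv G \<nu>" using zin zsub by blast
      have zUL: "inv sD \<otimes> z \<in> Uv G \<nu>" using zU lcos_mem_iff[OF sub_U sDc] by blast
      have agree: "\<forall>k\<in>carrier G. (\<nu>,k) \<in> rc \<longrightarrow> f k = hh G z k"
      proof (intro ballI impI)
        fix k assume kc: "k \<in> carrier G" and nk: "(\<nu>,k) \<in> rc"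
        show "f k = hh G z k"
        proof (cases "k = \<nu>")
          case True
          have "z <# Uv G \<nu> = sD <# Uv G \<nu>" using lcos_member_eq[OF sub_U sDc zU] .
          then have c: "sel G (z <# Uv G \<nu>) = sD" using selDU by simp
          have "inv d'' \<otimes> z \<in> Lv G \<nu>" using zin lcos_mem_iff[OF sub_L d''c] by blast
          moreover have "inv y \<otimes> (inv sD \<otimes> z) = inv d'' \<otimes> z" using d''_def sDc yc zc
            by (simp add: inv_mult_group m_assoc)
          ultimately have "y <# Lv G \<nu> = (inv sD \<otimes> z) <# Lv G \<nu>"
            using lcos_eq[OF sub_L[of \<nu>] yc, of "inv sD \<otimes> z"] sDc zc by simp
          then show ?thesis using True hh_app[OF nuc, of z] c y(2) by simp
        next
          case False
          have "inv sD \<otimes> z \<in> Lv G k" using zUL U_sub_L[OF nk] False by auto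
          then have hz: "hh G z k = hh G sD k" using hh_local[OF zc sDc kc] by blast
          have "f k = hh G sD k"
          proof (cases "(\<mu>,k) \<in> rc")
            case True then show ?thesis using hyp kc sD_def by simp
          next
            case nmk: False
            then have "(k,\<mu>) \<in> rc" "k \<noteq> \<mu>" using rr_total[OF kc mu] rr_refl[OF mu] by auto
            moreover have "k \<notin> S'" using numax nk False rr_antisym by blast
            ultimately show ?thesis using kc S'_def by auto
          qed
          then show ?thesis using hz by simp
        qed
      qed
      have "(\<nu>,\<mu>) \<in> rc - Id" using numu by simp
      then have "\<exists>x\<in>d'' <# Lv G \<nu>. hh G x = f" using 1 nuc d''c f agree z_def by blast
      then show ?thesis using zsub Dsub by blast
    qed
  qed
qed

lemma hh_surj:
  assumes inf: "infinite (carrier G)" and f: "f \<in> dprod rc (ZZ G) (\<lambda>_. \<one>)"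
  shows "\<exists>x\<in>carrier G. hh G x = f"
proof -
  define supp where "supp = {i \<in> carrier G. f i \<noteq> \<one>}"
  have sfin: "finite supp" using f supp_def by (simp add: dprod_def Field_card_of)
  obtain \<mu> where mu: "\<mu> \<in> carrier G" "\<forall>i\<in>supp. (i,\<mu>) \<in> rc \<and> i \<noteq> \<mu>"
  proof (cases "supp = {}")
    case True then show ?thesis using that[of \<one>] by simp
  next
    case False
    obtain m0 where m0: "m0 \<in> supp" "\<forall>j\<in>supp. (j,m0) \<in> rc"
      using rr_max[OF sfin False] supp_def by blast
    have m0c: "m0 \<in> Field rc" using m0 supp_def by (simp add: Field_card_of)
    obtain b where b: "b \<in> Field rc" "m0 \<noteq> b" "(m0,b) \<in> rc"
      using infinite_Card_order_limit[OF card_of_Card_order _ m0c] inf by (auto simp: Field_card_of)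
    have "\<forall>i\<in>supp. (i,b) \<in> rc \<and> i \<noteq> b" using m0(2) b rr_trans rr_antisym by metis
    then show ?thesis using that[of b] b(1) by (simp add: Field_card_of)
  qed
  have s1: "sel G (\<one> <# Lv G \<mu>) = \<one>" using sel_one lcos_self[OF sub_L one_closed] by blast
  have "\<forall>k\<in>carrier G. (\<mu>,k) \<in> rc \<longrightarrow> f k = hh G (sel G (\<one> <# Lv G \<mu>)) k"
  proof (intro ballI impI)
    fix k assume kc: "k \<in> carrier G" and mk: "(\<mu>,k) \<in> rc"
    have "k \<notin> supp" using mu(2) mk rr_antisym by blast
    then show "f k = hh G (sel G (\<one> <# Lv G \<mu>)) k" using s1 hh_one[OF kc] kc supp_def by simp
  qed
  then obtain x where "x \<in> \<one> <# Lv G \<mu>" "hh G x = f" using hh_surj_aux[of \<mu>] mu(1) f by blast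
  then show ?thesis using lcos_carrier[OF sub_L one_closed] by blast
qed



lemma corollary2_aux:
  assumes "\<not> countable (carrier G)"
    and "regularCard (card_of (carrier G))"
  shows "\<exists>(r :: ('a \<times> 'a) set) (Zs :: 'a \<Rightarrow> 'a set) (e :: 'a \<Rightarrow> 'a) (h :: 'a \<Rightarrow> ('a \<Rightarrow> 'a)).
           Well_order r \<and> (\<forall>i\<in>Field r. Zs i \<noteq> {} \<and> e i \<in> Zs i) \<and>
           asymorphism (carrier G) (group_params G) (group_ball G)
                       (dprod r Zs e) (Field r) (dprod_ball r Zs e) h"
proof -
  let ?r = "card_of (carrier G)"
  let ?Z = "dprod ?r (ZZ G) (\<lambda>_. \<one>)"
  have inf: "infinite (carrier G)" using assms(1) countable_finite by blast
  have img: "hh G ` carrier G = ?Z"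
  proof
    show "hh G ` carrier G \<subseteq> ?Z" using hh_dprod by blast
    show "?Z \<subseteq> hh G ` carrier G" using hh_surj[OF inf] by blast
  qed
  have bij: "bij_betw (hh G) (carrier G) ?Z" unfolding bij_betw_def using hh_inj img by blast
  have fwd: "prec_mapping (carrier G) (group_params G) (group_ball G) ?Z (Field ?r) (dprod_ball ?r (ZZ G) (\<lambda>_. \<one>)) (hh G)"
    unfolding prec_mapping_def
  proof (intro ballI)
    fix A assume A: "A \<in> group_params G"
    have A': "A \<subseteq> carrier G \<and> \<one> \<in> A \<and> card_of A <o ?r" using A unfolding group_params_def by blast
    have Asub: "A \<subseteq> carrier G" using A' by blast
    have Acard: "card_of A <o ?r" using A' by blast
    have "\<not> cofinal A ?r"
    proof
      assume "cofinal A ?r"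
      moreover have AF: "A \<subseteq> Field ?r" using Asub by (simp add: Field_card_of)
      ultimately have "card_of A =o ?r" using assms(2) unfolding regularCard_def by blast
      then show False using not_ordLess_ordIso[OF Acard] by simp
    qed
    then have "\<not> (\<forall>a\<in>Field ?r. \<exists>b\<in>A. a \<noteq> b \<and> (a,b) \<in> ?r)" unfolding cofinal_def .
    then obtain a where a0: "a \<in> Field ?r" "\<forall>b\<in>A. \<not> (a \<noteq> b \<and> (a,b) \<in> ?r)" by blast
    have a: "a \<in> carrier G" "\<forall>b\<in>A. a = b \<or> (a,b) \<notin> ?r" using a0 by (auto simp: Field_card_of)
    have Aunder: "A \<subseteq> under ?r a"
    proof
      fix b assume b: "b \<in> A"
      then have bc: "b \<in> carrier G" using Asub by blast
      have "a = b \<or> (a,b) \<notin> ?r" using a(2) b by blast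
      then have "(b,a) \<in> ?r"
      proof
        assume "a = b" then show ?thesis using rr_refl[OF a(1)] by simp
      next
        assume "(a,b) \<notin> ?r" then show ?thesis using rr_total[OF a(1) bc] by blast
      qed
      then show "b \<in> under ?r a" by (simp add: under_def)
    qed
    have finr: "\<not> finite (Field ?r)" using inf by (simp add: Field_card_of)
    have aF: "a \<in> Field ?r" using a(1) by (simp add: Field_card_of)
    from infinite_Card_order_limit[OF card_of_Card_order finr aF]
    obtain \<beta> where beta: "\<beta> \<in> Field ?r" "a \<noteq> \<beta>" "(a,\<beta>) \<in> ?r" by blast
    show "\<exists>\<beta>\<in>Field ?r. \<forall>x\<in>carrier G. hh G ` group_ball G x A \<subseteq> dprod_ball ?r (ZZ G) (\<lambda>_. \<one>) (hh G x) \<beta>"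
    proof (intro bexI[OF _ beta(1)] ballI subsetI)
      fix x w assume x: "x \<in> carrier G" and w: "w \<in> hh G ` group_ball G x A"
      then obtain z where z: "z \<in> x <# A" "w = hh G z" unfolding group_ball_def by blast
      then obtain \<alpha> where al: "\<alpha> \<in> A" "w = hh G (x \<otimes> \<alpha>)" unfolding l_coset_def by blast
      have alc: "\<alpha> \<in> carrier G" using al Asub by blast
      have zc: "x \<otimes> \<alpha> \<in> carrier G" using x alc by simp
      have aU: "\<alpha> \<in> Uv G a" unfolding Uv_def using Aunder al(1) by (blast intro: generate.incl)
      have "\<forall>j\<in>Field ?r. (\<beta>,j) \<in> ?r \<longrightarrow> hh G (x \<otimes> \<alpha>) j = hh G x j"
      proof (intro ballI impI)
        fix j assume j: "j \<in> Field ?r" "(\<beta>,j) \<in> ?r"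
        have jc: "j \<in> carrier G" using j by (simp add: Field_card_of)
        have aj1: "(a,j) \<in> ?r" using rr_trans[OF beta(3) j(2)] .
        have aj2: "a \<noteq> j"
        proof
          assume "a = j" then show False using rr_antisym[OF beta(3)] j(2) beta(2) by simp
        qed
        note aj = aj1 aj2
        have "inv x \<otimes> (x \<otimes> \<alpha>) = \<alpha>" using x alc by (simp add: m_assoc[symmetric])
        then have "inv x \<otimes> (x \<otimes> \<alpha>) \<in> Lv G j" using aU U_sub_L[OF aj] by auto
        then show "hh G (x \<otimes> \<alpha>) j = hh G x j" by (rule hh_local[OF zc x jc])
      qed
      then show "w \<in> dprod_ball ?r (ZZ G) (\<lambda>_. \<one>) (hh G x) \<beta>"
        unfolding dprod_ball_def using al hh_dprod[OF zc] by simp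
    qed
  qed
  have bwd: "prec_mapping ?Z (Field ?r) (dprod_ball ?r (ZZ G) (\<lambda>_. \<one>)) (carrier G) (group_params G) (group_ball G) (inv_into (carrier G) (hh G))"
    unfolding prec_mapping_def
  proof (intro ballI)
    fix l assume l: "l \<in> Field ?r"
    have lc: "l \<in> carrier G" using l by (simp add: Field_card_of)
    have us: "underS ?r l \<subseteq> carrier G" using Order_Relation.underS_Field[of ?r l] by (simp add: Field_card_of)
    have "card_of (underS ?r l) <o ?r" using card_of_underS[OF card_of_Card_order l] .
    then have "card_of (Lv G l) <o ?r" unfolding Lv_def using generate_card[OF assms(1,2) us] by blast
    moreover have "Lv G l \<subseteq> carrier G" "\<one> \<in> Lv G l" using subgroup.subset[OF sub_L] subgroup.one_closed[OF sub_L] by auto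
    ultimately have Lp: "Lv G l \<in> group_params G" by (simp add: group_params_def)
    show "\<exists>\<beta>\<in>group_params G. \<forall>f\<in>?Z. inv_into (carrier G) (hh G) ` dprod_ball ?r (ZZ G) (\<lambda>_. \<one>) f l
            \<subseteq> group_ball G (inv_into (carrier G) (hh G) f) \<beta>"
    proof (intro bexI[OF _ Lp] ballI subsetI)
      fix f w assume f: "f \<in> ?Z" and w: "w \<in> inv_into (carrier G) (hh G) ` dprod_ball ?r (ZZ G) (\<lambda>_. \<one>) f l"
      define x where "x = inv_into (carrier G) (hh G) f"
      have xc: "x \<in> carrier G" and hx: "hh G x = f"
        using f img x_def by (auto intro: inv_into_into f_inv_into_f)
      obtain v where v: "v \<in> dprod_ball ?r (ZZ G) (\<lambda>_. \<one>) f l" "w = inv_into (carrier G) (hh G) v"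
        using w by blast
      have vZ: "v \<in> ?Z" and vag: "\<forall>j\<in>Field ?r. (l,j) \<in> ?r \<longrightarrow> v j = f j" using v(1) by (auto simp: dprod_ball_def)
      have wc: "w \<in> carrier G" and hw: "hh G w = v"
        using vZ img v(2) by (auto intro: inv_into_into f_inv_into_f)
      have "\<forall>j\<in>carrier G. (l,j) \<in> ?r \<longrightarrow> hh G x j = hh G w j" using vag hx hw by (simp add: Field_card_of)
      then have "inv x \<otimes> w \<in> Lv G l" using agree_L[OF xc wc lc] by blast
      then show "w \<in> group_ball G (inv_into (carrier G) (hh G) f) (Lv G l)"
        unfolding group_ball_def using lcos_mem_iff[OF sub_L xc] wc x_def by simp
    qed
  qed
  have Zne: "\<forall>i\<in>Field ?r. ZZ G i \<noteq> {} \<and> \<one> \<in> ZZ G i"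
  proof
    fix i assume "i \<in> Field ?r"
    have e1: "\<one> = sel G (\<one> <# Lv G i)" using sel_one[OF lcos_self[OF sub_L one_closed]] by simp
    have "\<one> \<in> ZZ G i" unfolding ZZ_def by (rule image_eqI[where f="\<lambda>y. sel G (y <# Lv G i)", OF e1 subgroup.one_closed[OF sub_U[of i]]])
    then show "ZZ G i \<noteq> {} \<and> \<one> \<in> ZZ G i" by blast
  qed
  have W: "Well_order ?r" by (rule card_of_Well_order)
  have As: "asymorphism (carrier G) (group_params G) (group_ball G) ?Z (Field ?r) (dprod_ball ?r (ZZ G) (\<lambda>_. \<one>)) (hh G)"
    unfolding asymorphism_def using bij fwd bwd by (intro conjI)
  show ?thesis
    apply (rule exI[of _ ?r], rule exI[of _ "ZZ G"], rule exI[of _ "\<lambda>_. \<one>"], rule exI[of _ "hh G"])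
    using W Zne As by simp
qed


end

theorem corollary2:
  fixes G :: "('a, 'b) monoid_scheme"
  assumes "group G"
    and "\<not> countable (carrier G)"
    and "regularCard (card_of (carrier G))"
  shows "\<exists>(r :: ('a \<times> 'a) set) (Zs :: 'a \<Rightarrow> 'a set) (e :: 'a \<Rightarrow> 'a) (h :: 'a \<Rightarrow> ('a \<Rightarrow> 'a)).
           Well_order r \<and> (\<forall>i\<in>Field r. Zs i \<noteq> {} \<and> e i \<in> Zs i) \<and>
           asymorphism (carrier G) (group_params G) (group_ball G)
                       (dprod r Zs e) (Field r) (dprod_ball r Zs e) h"
  using group.corollary2_aux[OF assms] .

end
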